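(* Let $A=KQ/I$ be a linear Nakayama algebra with vertices $Q_0=\{1,\ldots,n\}$ labelled canonically $1\to2\to\cdots\to n$, and let $i\in Q_0$ with $e(S_i)\ge 2$. Then there exists an indecomposable $A$-module $M$ with a minimal injective coresolution $0\to M\to I^0\to\cdots\to I^d\to 0$ such that $I^d\cong I(i)$, $d=\operatorname{idim}M=e(S_i)-1$, and moreover $$\underline{\dim}(M)_{[1:\hat h(i)-1]}=r_j(\omega_A,\hat h(i)-1)\quad\text{and}\quad \underline{\dim}(M)_{[\hat h(i):n]}=0$$ for some $j>i$. In particular, $M$ has no composition factor $S_\ell$ with $\ell\ge \hat h(i)$.
   Context: A linear Nakayama algebra is $A=KQ/I$ with $K$ a field, $Q$ the quiver $1\to2\to\cdots\to n$ and $I$ admissible. Modules are finitely generated right modules; $S_i$, $I(i)=D(Ae_i)$ denote simple and indecomposable injective modules, $I(S)$ the injective envelope of $S$, $\Omega$ the syzygy. For a simple $S$, $e(S)=\min\{\operatorname{pdim}S,\operatorname{pdim}I(S)\}$; $N(S)=S$ if $e(S)$ is odd and $N(S)=I(S)$ if $e(S)$ is even; $h(S)=\operatorname{top}\Omega^{e(S)}(N(S))$ (a simple module), and $\hat h(i)=j$ if $h(S_i)\cong S_j$. The Cartan matrix is $\omega_A=(\dim_K e_jAe_i)_{i,j}$ (its $j$-th row is $\underline{\dim}\,I(j)$). For an $n\times n$ matrix $B$, $r_j(B,k)$ denotes the vector of the first $k$ entries of the $j$-th row of $B$; for a vector $v=(v_1,\ldots,v_n)$, $v_{[a:b]}=(v_a,\ldots,v_b)$.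 $\underline{\dim}(M)$ is the dimension vector of $M$. *)

theory Defs
  imports Main
begin

text \<open>
Combinatorial model of a linear Nakayama algebra A = KQ/I, Q = 1 -> 2 -> ... -> n,
right modules = representations of Q.  Since between two vertices of Q there is at
most one path, every admissible I is spanned by paths, and A is determined by its
Kupisch series c, where c a = length of the indecomposable projective P(a) = e_a A.
Indecomposable modules are (up to isomorphism) the uniserial interval modules
M(a,b) with composition factors S_a (top), ..., S_b (socle), existing iff
b - a + 1 <= c a.  The zero module is represented by None.
\<close>

definition kupisch :: "nat \<Rightarrow> (nat \<Rightarrow> nat) \<Rightarrow> bool" where
  "kupisch n c \<longleftrightarrow> n \<ge> 1 \<and> c n = 1 \<and>
     (\<forall>a\<in>{1..<n}. 2 \<le> c a \<and> c a \<le> c (Suc a) + 1)"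

definition is_mod :: "nat \<Rightarrow> (nat \<Rightarrow> nat) \<Rightarrow> nat \<times> nat \<Rightarrow> bool" where
  "is_mod n c M \<longleftrightarrow> (case M of (a,b) \<Rightarrow> 1 \<le> a \<and> a \<le> b \<and> b \<le> n \<and> b - a + 1 \<le> c a)"

definition dimvec :: "nat \<times> nat \<Rightarrow> nat \<Rightarrow> nat" where
  "dimvec M l = (case M of (a,b) \<Rightarrow> if a \<le> l \<and> l \<le> b then 1 else 0)"

definition simple :: "nat \<Rightarrow> nat \<times> nat" where
  "simple i = (i, i)"

definition projmod :: "(nat \<Rightarrow> nat) \<Rightarrow> nat \<Rightarrow> nat \<times> nat" where
  "projmod c a = (a, a + c a - 1)"

text \<open>indecomposable injective I(b) = D(A e_b): the vertices k <= b with a nonzero path k -> b\<close>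
definition injstart :: "(nat \<Rightarrow> nat) \<Rightarrow> nat \<Rightarrow> nat" where
  "injstart c b = (LEAST k. 1 \<le> k \<and> b - k + 1 \<le> c k)"

definition injmod :: "(nat \<Rightarrow> nat) \<Rightarrow> nat \<Rightarrow> nat \<times> nat" where
  "injmod c b = (injstart c b, b)"

text \<open>syzygy: kernel of the projective cover P(a) -> M(a,b)\<close>
definition syz :: "(nat \<Rightarrow> nat) \<Rightarrow> nat \<times> nat \<Rightarrow> (nat \<times> nat) option" where
  "syz c M = (case M of (a,b) \<Rightarrow>
     if b < a + c a - 1 then Some (b + 1, a + c a - 1) else None)"

text \<open>cosyzygy: cokernel of the injective envelope M(a,b) -> I(b)\<close>
definition cosyz :: "(nat \<Rightarrow> nat) \<Rightarrow> nat \<times> nat \<Rightarrow> (nat \<times> nat) option" where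
  "cosyz c M = (case M of (a,b) \<Rightarrow>
     if injstart c b < a then Some (injstart c b, a - 1) else None)"

definition syzo :: "(nat \<Rightarrow> nat) \<Rightarrow> (nat \<times> nat) option \<Rightarrow> (nat \<times> nat) option" where
  "syzo c M = Option.bind M (syz c)"

definition cosyzo :: "(nat \<Rightarrow> nat) \<Rightarrow> (nat \<times> nat) option \<Rightarrow> (nat \<times> nat) option" where
  "cosyzo c M = Option.bind M (cosyz c)"

text \<open>projective / injective dimension of a nonzero indecomposable module
  (finite, since linear Nakayama algebras have finite global dimension)\<close>
definition pdim :: "(nat \<Rightarrow> nat) \<Rightarrow> nat \<times> nat \<Rightarrow> nat" where
  "pdim c M = (LEAST m. (syzo c ^^ Suc m) (Some M) = None)"

definition idim :: "(nat \<Rightarrow> nat) \<Rightarrow> nat \<times> nat \<Rightarrow> nat" where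
  "idim c M = (LEAST m. (cosyzo c ^^ Suc m) (Some M) = None)"

text \<open>k-th term I^k of the minimal injective coresolution of M: the injective
  envelope of the k-th cosyzygy (an indecomposable injective, as the cosyzygy is uniserial)\<close>
definition inj_coresol_term :: "(nat \<Rightarrow> nat) \<Rightarrow> nat \<times> nat \<Rightarrow> nat \<Rightarrow> nat \<times> nat" where
  "inj_coresol_term c M k = injmod c (snd (the ((cosyzo c ^^ k) (Some M))))"

definition e_simple :: "(nat \<Rightarrow> nat) \<Rightarrow> nat \<Rightarrow> nat" where
  "e_simple c i = min (pdim c (simple i)) (pdim c (injmod c i))"

definition N_simple :: "(nat \<Rightarrow> nat) \<Rightarrow> nat \<Rightarrow> nat \<times> nat" where
  "N_simple c i = (if odd (e_simple c i) then simple i else injmod c i)"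

text \<open>top of Omega^{e(S_i)}(N(S_i)) is the simple S_{hhat i}\<close>
definition hhat :: "(nat \<Rightarrow> nat) \<Rightarrow> nat \<Rightarrow> nat" where
  "hhat c i = fst (the ((syzo c ^^ e_simple c i) (Some (N_simple c i))))"

text \<open>Cartan matrix omega_A, entry (i,j) = dim e_j A e_i = [nonzero path j -> i]\<close>
definition cartan :: "(nat \<Rightarrow> nat) \<Rightarrow> nat \<Rightarrow> nat \<Rightarrow> nat" where
  "cartan c i j = (if j \<le> i \<and> i - j + 1 \<le> c j then 1 else 0)"

end

theory Submission imports Defs begin

definition Pp :: "(nat \<Rightarrow> nat) \<Rightarrow> nat \<Rightarrow> nat" where "Pp c u = u + c (Suc u)"
definition Qq :: "(nat \<Rightarrow> nat) \<Rightarrow> nat \<Rightarrow> nat" where "Qq c v = injstart c v - 1"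

fun ch :: "(nat \<Rightarrow> nat) \<Rightarrow> nat \<Rightarrow> nat \<Rightarrow> nat \<Rightarrow> nat" where
  "ch f u v 0 = u"
| "ch f u v (Suc 0) = v"
| "ch f u v (Suc (Suc t)) = f (ch f u v t)"

lemma ch_even: "ch f u v (2*m) = (f^^m) u"
  by (induction m) (auto simp: numeral_2_eq_2)
lemma ch_odd: "ch f u v (Suc (2*m)) = (f^^m) v"
  by (induction m) (auto simp: numeral_2_eq_2)

lemma K1: "kupisch n c \<Longrightarrow> 1 \<le> a \<Longrightarrow> a \<le> n \<Longrightarrow> 1 \<le> c a"
proof -
  assume k: "kupisch n c" "1 \<le> a" "a \<le> n"
  show ?thesis
  proof (cases "a = n")
    case False
    then have "a \<in> {1..<n}" using k by auto
    then show ?thesis using k(1) unfolding kupisch_def by fastforce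
  qed (use k in \<open>auto simp: kupisch_def\<close>)
qed

lemma K2aux: "kupisch n c \<Longrightarrow> \<forall>a. n - a = k \<longrightarrow> 1 \<le> a \<longrightarrow> a \<le> n \<longrightarrow> a + c a \<le> n + 1"
proof (induction k)
  case 0 then show ?case unfolding kupisch_def by auto
next
  case (Suc k)
  show ?case
  proof (intro allI impI)
    fix a assume a: "n - a = Suc k" "1 \<le> a" "a \<le> n"
    have "Suc a + c (Suc a) \<le> n + 1" 
    proof -
      have "n - Suc a = k" "1 \<le> Suc a" "Suc a \<le> n" using a by auto
      then show ?thesis using Suc.IH[OF Suc.prems] by blast
    qed
    moreover have "c a \<le> c (Suc a) + 1" using Suc.prems a unfolding kupisch_def by auto
    ultimately show "a + c a \<le> n + 1" by simp
  qed
qed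

lemma K2: "kupisch n c \<Longrightarrow> 1 \<le> a \<Longrightarrow> a \<le> n \<Longrightarrow> a + c a \<le> n + 1"
  using K2aux by blast

lemma P_bounds: "kupisch n c \<Longrightarrow> u < n \<Longrightarrow> u < Pp c u \<and> Pp c u \<le> n"
  using K1[of n c "Suc u"] K2[of n c "Suc u"] unfolding Pp_def by auto

lemma P_step: "kupisch n c \<Longrightarrow> Suc u < n \<Longrightarrow> Pp c u \<le> Pp c (Suc u)"
  unfolding Pp_def kupisch_def by auto

lemma P_mono_aux: "kupisch n c \<Longrightarrow> \<forall>u. u \<le> u' \<longrightarrow> u' < n \<longrightarrow> Pp c u \<le> Pp c u'"
proof (induction u')
  case 0 then show ?case by auto
next
  case (Suc u')
  show ?case
  proof (intro allI impI)
    fix u assume u: "u \<le> Suc u'" "Suc u' < n"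
    show "Pp c u \<le> Pp c (Suc u')"
    proof (cases "u = Suc u'")
      case False
      then have "Pp c u \<le> Pp c u'" using Suc u by auto
      also have "\<dots> \<le> Pp c (Suc u')" using P_step Suc.prems u by auto
      finally show ?thesis .
    qed simp
  qed
qed

lemma P_mono: "kupisch n c \<Longrightarrow> u \<le> u' \<Longrightarrow> u' < n \<Longrightarrow> Pp c u \<le> Pp c u'"
  using P_mono_aux by blast

lemma inj_ex: "kupisch n c \<Longrightarrow> v \<le> n \<Longrightarrow> 1 \<le> injstart c v \<and> injstart c v \<le> max 1 v
   \<and> v - injstart c v + 1 \<le> c (injstart c v)"
proof -
  assume k: "kupisch n c" "v \<le> n"
  have n1: "1 \<le> n" using k unfolding kupisch_def by auto
  have w: "1 \<le> max 1 v \<and> v - max 1 v + 1 \<le> c (max 1 v)"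
    using K1[OF k(1), of "max 1 v"] k n1 by auto
  have "1 \<le> injstart c v \<and> v - injstart c v + 1 \<le> c (injstart c v)"
    unfolding injstart_def by (rule LeastI[of _ "max 1 v"]) (rule w)
  moreover have "injstart c v \<le> max 1 v"
    unfolding injstart_def by (rule Least_le) (rule w)
  ultimately show ?thesis by auto
qed

lemma pred_iff: "kupisch n c \<Longrightarrow> 1 \<le> k \<Longrightarrow> k \<le> n \<Longrightarrow> (v - k + 1 \<le> c k) \<longleftrightarrow> v \<le> Pp c (k - 1)"
  using K1[of n c k] unfolding Pp_def by (cases "k \<le> v") auto

lemma Gal: "kupisch n c \<Longrightarrow> u < n \<Longrightarrow> 1 \<le> v \<Longrightarrow> v \<le> n \<Longrightarrow> (Qq c v \<le> u \<longleftrightarrow> v \<le> Pp c u)"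
proof
  assume k: "kupisch n c" "u < n" "1 \<le> v" "v \<le> n"
  {
    assume "Qq c v \<le> u"
    then have a: "injstart c v - 1 \<le> u" unfolding Qq_def .
    have i: "1 \<le> injstart c v" "injstart c v \<le> v" "v - injstart c v + 1 \<le> c (injstart c v)"
      using inj_ex[OF k(1) k(4)] k(3) by auto
    then have "v \<le> Pp c (injstart c v - 1)" using pred_iff[OF k(1), of "injstart c v" v] k by auto
    also have "\<dots> \<le> Pp c u" using P_mono[OF k(1)] a k(2) by auto
    finally show "v \<le> Pp c u" .
  }
  {
    assume b: "v \<le> Pp c u"
    have "v - Suc u + 1 \<le> c (Suc u)" using pred_iff[OF k(1), of "Suc u" v] b k by auto
    then have "injstart c v \<le> Suc u" unfolding injstart_def by (intro Least_le) auto
    then show "Qq c v \<le> u" unfolding Qq_def by auto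
  }
qed

lemma Q_le: "kupisch n c \<Longrightarrow> v \<le> n \<Longrightarrow> Qq c v \<le> v \<and> (1 \<le> v \<longrightarrow> Qq c v < v)"
  using inj_ex[of n c v] unfolding Qq_def by auto

lemma Q_mono: "kupisch n c \<Longrightarrow> v \<le> v' \<Longrightarrow> 1 \<le> v \<Longrightarrow> v' \<le> n \<Longrightarrow> Qq c v \<le> Qq c v'"
proof -
  assume k: "kupisch n c" "v \<le> v'" "1 \<le> v" "v' \<le> n"
  have q: "Qq c v' < n" using Q_le[OF k(1) k(4)] k by auto
  have "v' \<le> Pp c (Qq c v')" using Gal[OF k(1) q, of v'] k by auto
  then show ?thesis using Gal[OF k(1) q, of v] k by auto
qed

lemma syz_eq: "syz c (u + 1, v) = (if v < Pp c u then Some (v + 1, Pp c u) else None)"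
  by (simp add: syz_def Pp_def)

lemma cosyz_eq: "1 \<le> injstart c v \<Longrightarrow> cosyz c (u + 1, v) = (if Qq c v < u then Some (Qq c v + 1, u) else None)"
  by (auto simp add: cosyz_def Qq_def)

lemma syz_iter: "(syzo c ^^ k) (Some (u + 1, v)) =
  (if \<forall>t<k. ch (Pp c) u v (Suc t) < ch (Pp c) u v (Suc (Suc t))
   then Some (ch (Pp c) u v k + 1, ch (Pp c) u v (Suc k)) else None)"
proof (induction k)
  case 0 then show ?case by simp
next
  case (Suc k)
  have eq: "(\<forall>t<Suc k. ch (Pp c) u v (Suc t) < ch (Pp c) u v (Suc (Suc t))) \<longleftrightarrow>
     (\<forall>t<k. ch (Pp c) u v (Suc t) < ch (Pp c) u v (Suc (Suc t))) \<and> ch (Pp c) u v (Suc k) < ch (Pp c) u v (Suc (Suc k))"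
    by (auto simp: less_Suc_eq)
  show ?case
  proof (cases "\<forall>t<k. ch (Pp c) u v (Suc t) < ch (Pp c) u v (Suc (Suc t))")
    case True
    then have h: "(syzo c ^^ k) (Some (u + 1, v)) = Some (ch (Pp c) u v k + 1, ch (Pp c) u v (Suc k))"
      using Suc by simp
    have "(syzo c ^^ Suc k) (Some (u + 1, v)) = syzo c ((syzo c ^^ k) (Some (u + 1, v)))" by simp
    also have "\<dots> = syz c (ch (Pp c) u v k + 1, ch (Pp c) u v (Suc k))"
      unfolding h by (simp add: syzo_def)
    also have "\<dots> = (if ch (Pp c) u v (Suc k) < ch (Pp c) u v (Suc (Suc k)) then Some (ch (Pp c) u v (Suc k) + 1, ch (Pp c) u v (Suc (Suc k))) else None)"
      unfolding syz_eq by simp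
    finally show ?thesis using True eq by simp
  next
    case False
    then have h: "(syzo c ^^ k) (Some (u + 1, v)) = None" using Suc by simp
    have "(syzo c ^^ Suc k) (Some (u + 1, v)) = syzo c ((syzo c ^^ k) (Some (u + 1, v)))" by simp
    also have "\<dots> = None" unfolding h by (simp add: syzo_def)
    finally show ?thesis using False eq by simp
  qed
qed

lemma cosyz_iter:
  assumes "\<forall>t. 1 \<le> injstart c (ch (Qq c) v u t)"
  shows "(cosyzo c ^^ k) (Some (u + 1, v)) =
  (if \<forall>t<k. ch (Qq c) v u (Suc (Suc t)) < ch (Qq c) v u (Suc t)
   then Some (ch (Qq c) v u (Suc k) + 1, ch (Qq c) v u k) else None)"
proof (induction k)
  case 0 then show ?case by simp
next
  case (Suc k)
  have a: "1 \<le> injstart c (ch (Qq c) v u k)" using assms by blast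
  have eq: "(\<forall>t<Suc k. ch (Qq c) v u (Suc (Suc t)) < ch (Qq c) v u (Suc t)) \<longleftrightarrow>
     (\<forall>t<k. ch (Qq c) v u (Suc (Suc t)) < ch (Qq c) v u (Suc t)) \<and> ch (Qq c) v u (Suc (Suc k)) < ch (Qq c) v u (Suc k)"
    by (auto simp: less_Suc_eq)
  show ?case
  proof (cases "\<forall>t<k. ch (Qq c) v u (Suc (Suc t)) < ch (Qq c) v u (Suc t)")
    case True
    then have h: "(cosyzo c ^^ k) (Some (u + 1, v)) = Some (ch (Qq c) v u (Suc k) + 1, ch (Qq c) v u k)"
      using Suc by simp
    have "(cosyzo c ^^ Suc k) (Some (u + 1, v)) = cosyzo c ((cosyzo c ^^ k) (Some (u + 1, v)))" by simp
    also have "\<dots> = cosyz c (ch (Qq c) v u (Suc k) + 1, ch (Qq c) v u k)"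
      unfolding h by (simp add: cosyzo_def)
    also have "\<dots> = (if ch (Qq c) v u (Suc (Suc k)) < ch (Qq c) v u (Suc k) then Some (ch (Qq c) v u (Suc (Suc k)) + 1, ch (Qq c) v u (Suc k)) else None)"
      unfolding cosyz_eq[OF a] by simp
    finally show ?thesis using True eq by simp
  next
    case False
    then have h: "(cosyzo c ^^ k) (Some (u + 1, v)) = None" using Suc by simp
    have "(cosyzo c ^^ Suc k) (Some (u + 1, v)) = cosyzo c ((cosyzo c ^^ k) (Some (u + 1, v)))" by simp
    also have "\<dots> = None" unfolding h by (simp add: cosyzo_def)
    finally show ?thesis using False eq by simp
  qed
qed

lemma Least_ex_le: "(LEAST m. \<exists>t\<le>m. R t) = (LEAST m::nat. R m)"
proof (cases "\<exists>m. R m")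
  case True
  show ?thesis
  proof (rule Least_equality)
    show "\<exists>t\<le>(LEAST m. R m). R t" using LeastI_ex[OF True] by blast
    fix y assume "\<exists>t\<le>y. R t"
    then obtain t where "t \<le> y" "R t" by blast
    then show "(LEAST m. R m) \<le> y" using Least_le[of R t] by linarith
  qed
next
  case False
  then have "(\<lambda>m. \<exists>t\<le>m. R t) = R" by auto
  then show ?thesis by simp
qed

lemma pdim_ch: "pdim c (u + 1, v) = (LEAST m. \<not> ch (Pp c) u v (Suc m) < ch (Pp c) u v (Suc (Suc m)))"
proof -
  have "pdim c (u + 1, v) = (LEAST m. \<exists>t\<le>m. \<not> ch (Pp c) u v (Suc t) < ch (Pp c) u v (Suc (Suc t)))"
    unfolding pdim_def syz_iter by (simp add: less_Suc_eq_le)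
  then show ?thesis using Least_ex_le by simp
qed

lemma idim_ch:
  assumes "\<forall>t. 1 \<le> injstart c (ch (Qq c) v u t)"
  shows "idim c (u + 1, v) = (LEAST m. \<not> ch (Qq c) v u (Suc (Suc m)) < ch (Qq c) v u (Suc m))"
proof -
  have "idim c (u + 1, v) = (LEAST m. \<exists>t\<le>m. \<not> ch (Qq c) v u (Suc (Suc t)) < ch (Qq c) v u (Suc t))"
    unfolding idim_def cosyz_iter[OF assms] by (simp add: less_Suc_eq_le)
  then show ?thesis using Least_ex_le by simp
qed

lemma chain_bound:
  assumes k: "kupisch n c" and u: "u < n" and v: "v \<le> n"
    and st: "\<forall>t<K. ch (Pp c) u v (Suc t) < ch (Pp c) u v (Suc (Suc t))"
  shows "\<forall>t\<le>Suc K. ch (Pp c) u v t \<le> n \<and> (t \<le> K \<longrightarrow> ch (Pp c) u v t < n)"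
proof -
  have A: "t \<le> Suc K \<longrightarrow> ch (Pp c) u v t \<le> n" for t
  proof (induction t rule: less_induct)
    case (less t)
    show ?case
    proof (cases t)
      case 0 then show ?thesis using u by simp
    next
      case (Suc t1)
      show ?thesis
      proof (cases t1)
        case 0 then show ?thesis using Suc v by simp
      next
        case (Suc t2)
        show ?thesis
        proof
          assume t: "t \<le> Suc K"
          have "ch (Pp c) u v t2 < n"
          proof (cases t2)
            case 0 then show ?thesis using u by simp
          next
            case (Suc t3)
            have "ch (Pp c) u v (Suc t3) < ch (Pp c) u v (Suc (Suc t3))" using st t Suc \<open>t = Suc t1\<close> \<open>t1 = Suc t2\<close> by auto
            moreover have "ch (Pp c) u v (Suc (Suc t3)) \<le> n" using less[of "Suc (Suc t3)"] t Suc \<open>t = Suc t1\<close> \<open>t1 = Suc t2\<close> by auto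
            ultimately show ?thesis using Suc by simp
          qed
          then show "ch (Pp c) u v t \<le> n" using P_bounds[OF k] \<open>t = Suc t1\<close> \<open>t1 = Suc t2\<close> by simp
        qed
      qed
    qed
  qed
  show ?thesis
  proof (intro allI impI conjI)
    fix t assume t: "t \<le> Suc K"
    then show "ch (Pp c) u v t \<le> n" using A by blast
    assume "t \<le> K"
    then show "ch (Pp c) u v t < n"
    proof (cases t)
      case 0 then show ?thesis using u by simp
    next
      case (Suc t1)
      then have "ch (Pp c) u v (Suc t1) < ch (Pp c) u v (Suc (Suc t1))" using st \<open>t \<le> K\<close> by auto
      moreover have "ch (Pp c) u v (Suc (Suc t1)) \<le> n" using A[of "Suc (Suc t1)"] Suc \<open>t \<le> K\<close> by blast
      ultimately show ?thesis using Suc by simp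
    qed
  qed
qed

lemma chain_exists:
  assumes k: "kupisch n c" and u: "u < n" and v: "v \<le> n"
  shows "\<exists>m. \<not> ch (Pp c) u v (Suc m) < ch (Pp c) u v (Suc (Suc m))"
proof (rule ccontr)
  assume "\<not> ?thesis"
  then have st: "\<forall>t. ch (Pp c) u v (Suc t) < ch (Pp c) u v (Suc (Suc t))" by auto
  have g: "t \<le> ch (Pp c) u v (Suc t)" for t
  proof (induction t)
    case (Suc t)
    have "ch (Pp c) u v (Suc t) < ch (Pp c) u v (Suc (Suc t))" using st by blast
    then show ?case using Suc.IH by linarith
  qed simp
  have "ch (Pp c) u v (Suc (Suc n)) \<le> n"
    using chain_bound[OF k u v, where K="Suc n"] st by blast
  moreover have "ch (Pp c) u v (Suc (Suc n)) > n" using g[of "Suc n"] by linarith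
  ultimately show False by simp
qed

lemma chain_mono:
  assumes st: "\<forall>t<K. w (Suc t) < w (Suc (Suc t))"
  shows "1 \<le> a \<Longrightarrow> a \<le> b \<Longrightarrow> b \<le> Suc K \<Longrightarrow> w a \<le> (w b :: nat)"
proof (induction b)
  case 0 then show ?case by simp
next
  case (Suc b)
  show ?case
  proof (cases "a = Suc b")
    case False
    then have "w a \<le> w b" "1 \<le> b" using Suc by auto
    moreover have "w b < w (Suc b)"
    proof -
      have "b - 1 < K" using Suc \<open>1 \<le> b\<close> by simp
      then have "w (Suc (b - 1)) < w (Suc (Suc (b - 1)))" using st by blast
      then show ?thesis using \<open>1 \<le> b\<close> by simp
    qed
    ultimately show ?thesis by simp
  qed simp
qed

lemma GD:
  assumes k: "kupisch n c"
    and chq: "\<And>t. w (Suc (Suc t)) = Pp c (w t)"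
  shows "(\<forall>t<s + 2*m. w t < n) \<Longrightarrow> w (s + 2*m) < v \<Longrightarrow> v \<le> w (Suc (s + 2*m)) \<Longrightarrow> v \<le> n \<Longrightarrow>
     w s < (Qq c ^^ m) v \<and> (Qq c ^^ m) v \<le> w (Suc s)"
proof (induction m arbitrary: v)
  case 0 then show ?case by simp
next
  case (Suc m)
  have e1: "w (s + 2 * Suc m) = Pp c (w (s + 2*m))" using chq[of "s + 2*m"] by (simp add: numeral_2_eq_2)
  have e2: "w (Suc (s + 2 * Suc m)) = Pp c (w (Suc (s + 2*m)))" using chq[of "Suc (s + 2*m)"] by (simp add: numeral_2_eq_2)
  have d1: "w (s + 2*m) < n" "w (Suc (s + 2*m)) < n" using Suc.prems(1) by auto
  have v1: "1 \<le> v" using Suc.prems(2) by auto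
  have q1: "w (s + 2*m) < Qq c v"
    using Gal[OF k d1(1) v1 Suc.prems(4)] Suc.prems(2) e1 by auto
  have q2: "Qq c v \<le> w (Suc (s + 2*m))"
    using Gal[OF k d1(2) v1 Suc.prems(4)] Suc.prems(3) e2 by auto
  have qn: "Qq c v \<le> n" using Q_le[OF k Suc.prems(4)] Suc.prems(4) by linarith
  have dm: "\<forall>t<s + 2*m. w t < n" using Suc.prems(1) by auto
  have "w s < (Qq c ^^ m) (Qq c v) \<and> (Qq c ^^ m) (Qq c v) \<le> w (Suc s)"
    by (rule Suc.IH[OF dm q1 q2 qn])
  then show ?case by (simp add: funpow_swap1)
qed

lemma xz_even:
  assumes k: "kupisch n c" and le: "u' \<le> u"
  shows "(\<forall>l<m. ch (Pp c) u v (2*l) < n) \<Longrightarrow> ch (Pp c) u' v (2*m) \<le> ch (Pp c) u v (2*m)"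
proof (induction m)
  case 0 then show ?case using le by simp
next
  case (Suc m)
  then have a: "ch (Pp c) u' v (2*m) \<le> ch (Pp c) u v (2*m)" "ch (Pp c) u v (2*m) < n" by auto
  have "Pp c (ch (Pp c) u' v (2*m)) \<le> Pp c (ch (Pp c) u v (2*m))" using P_mono[OF k a] .
  then show ?case by (simp add: numeral_2_eq_2)
qed

lemma xz_odd: "ch f u' v (Suc (2*m)) = ch f u v (Suc (2*m))"
  by (simp add: ch_odd)

lemma Qch_bound:
  assumes k: "kupisch n c" and "y0 \<le> n" "y1 \<le> n"
  shows "ch (Qq c) y0 y1 t \<le> n"
proof (induction t rule: less_induct)
  case (less t)
  show ?case
  proof (cases t)
    case 0 then show ?thesis using assms by simp
  next
    case (Suc t1)
    then show ?thesis
    proof (cases t1)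
      case 0 then show ?thesis using assms Suc by simp
    next
      case (Suc t2)
      then have h: "ch (Qq c) y0 y1 t2 \<le> n" using less \<open>t = Suc t1\<close> by auto
      have "Qq c (ch (Qq c) y0 y1 t2) \<le> ch (Qq c) y0 y1 t2" using Q_le[OF k h] by blast
      then show ?thesis using h Suc \<open>t = Suc t1\<close> by simp
    qed
  qed
qed

lemma final:
  assumes k: "kupisch n c" and i: "i \<in> {1..n}"
    and j: "y0 < j" "j \<le> n" "i < j"
    and st: "\<forall>t<d. ch (Qq c) y0 (Qq c j) (Suc (Suc t)) < ch (Qq c) y0 (Qq c j) (Suc t)"
    and ns: "\<not> ch (Qq c) y0 (Qq c j) (Suc (Suc d)) < ch (Qq c) y0 (Qq c j) (Suc d)"
    and yd: "ch (Qq c) y0 (Qq c j) d = i"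
    and qj: "Qq c j < y0"
    and hh: "hhat c i = y0 + 1"
    and ed: "e_simple c i - 1 = d"
  shows "\<exists>M. is_mod n c M \<and>
           idim c M = e_simple c i - 1 \<and>
           inj_coresol_term c M (idim c M) = injmod c i \<and>
           (\<exists>j. i < j \<and> j \<le> n \<and>
              (\<forall>l\<in>{1..<hhat c i}. dimvec M l = cartan c j l) \<and>
              (\<forall>l\<in>{hhat c i..n}. dimvec M l = 0))"
proof -
  let ?y = "ch (Qq c) y0 (Qq c j)"
  have j1: "1 \<le> j" using j by auto
  have qjn: "Qq c j \<le> n" using Q_le[OF k j(2)] j by auto
  have y0n: "y0 \<le> n" using j by auto
  have yall: "\<forall>t. 1 \<le> injstart c (?y t)"
    using Qch_bound[OF k y0n qjn] inj_ex[OF k] by blast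
  have id: "idim c (Qq c j + 1, y0) = d"
    unfolding idim_ch[OF yall]
  proof (rule Least_equality)
    show "\<not> ?y (Suc (Suc d)) < ?y (Suc d)" by (rule ns)
    show "\<And>m. \<not> ?y (Suc (Suc m)) < ?y (Suc m) \<Longrightarrow> d \<le> m"
      using st by (meson not_le)
  qed
  have ct: "inj_coresol_term c (Qq c j + 1, y0) d = injmod c i"
    unfolding inj_coresol_term_def cosyz_iter[OF yall] using st yd by simp
  have pj: "j \<le> Pp c (Qq c j)" using Gal[OF k, of "Qq c j" j] qj y0n j1 j by auto
  have im: "is_mod n c (Qq c j + 1, y0)"
    unfolding is_mod_def using qj y0n pj j unfolding Pp_def by auto
  have dv: "dimvec (Qq c j + 1, y0) l = cartan c j l" if l: "l \<in> {1..<hhat c i}" for l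
  proof -
    have l1: "1 \<le> l" "l \<le> y0" using l hh by auto
    have "(j - l + 1 \<le> c l) \<longleftrightarrow> j \<le> Pp c (l - 1)" using pred_iff[OF k l1(1)] l1 y0n by auto
    also have "\<dots> \<longleftrightarrow> Qq c j \<le> l - 1" using Gal[OF k, of "l - 1" j] l1 y0n j1 j by auto
    finally show ?thesis unfolding dimvec_def cartan_def using l1 j by auto
  qed
  have dz: "dimvec (Qq c j + 1, y0) l = 0" if l: "l \<in> {hhat c i..n}" for l
    using l hh unfolding dimvec_def by auto
  show ?thesis
    apply (rule exI[of _ "(Qq c j + 1, y0)"])
    using im id ct dv dz j ed by auto
qed


theorem lemma3p3:
  fixes n :: nat and c :: "nat \<Rightarrow> nat" and i :: nat
  assumes "kupisch n c"
    and "i \<in> {1..n}"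
    and "e_simple c i \<ge> 2"
  shows "\<exists>M. is_mod n c M \<and>
           idim c M = e_simple c i - 1 \<and>
           inj_coresol_term c M (idim c M) = injmod c i \<and>
           (\<exists>j. i < j \<and> j \<le> n \<and>
              (\<forall>l\<in>{1..<hhat c i}. dimvec M l = cartan c j l) \<and>
              (\<forall>l\<in>{hhat c i..n}. dimvec M l = 0))"
proof -
  note k = assms(1)
  have i1: "1 \<le> i" "i \<le> n" using assms(2) by auto
  define x where "x = ch (Pp c) (i - 1) i"
  define z where "z = ch (Pp c) (Qq c i) i"
  have chx: "\<And>t. x (Suc (Suc t)) = Pp c (x t)" by (simp add: x_def)
  have chz: "\<And>t. z (Suc (Suc t)) = Pp c (z t)" by (simp add: z_def)
  have qi: "Qq c i < i" using Q_le[OF k i1(2)] i1 by auto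
  have qin: "Qq c i < n" using qi i1 by auto
  have inji: "injstart c i = Qq c i + 1" using inj_ex[OF k i1(2)] unfolding Qq_def by auto
  have x0: "x 0 = i - 1" "x 1 = i" by (simp_all add: x_def)
  have z0: "z 0 = Qq c i" "z 1 = i" by (simp_all add: z_def)
  have Sx: "simple i = (i - 1 + 1, i)" using i1 by (simp add: simple_def)
  have Iz: "injmod c i = (Qq c i + 1, i)" using inji by (simp add: injmod_def)
  define dS where "dS = (LEAST m. \<not> x (Suc m) < x (Suc (Suc m)))"
  define dI where "dI = (LEAST m. \<not> z (Suc m) < z (Suc (Suc m)))"
  have pS: "pdim c (simple i) = dS" unfolding Sx pdim_ch dS_def x_def ..
  have pI: "pdim c (injmod c i) = dI" unfolding Iz pdim_ch dI_def z_def ..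
  have eS: "e_simple c i = min dS dI" unfolding e_simple_def pS pI ..
  have exS: "\<exists>m. \<not> x (Suc m) < x (Suc (Suc m))"
    unfolding x_def by (rule chain_exists[OF k]) (use i1 in auto)
  have exI: "\<exists>m. \<not> z (Suc m) < z (Suc (Suc m))"
    unfolding z_def by (rule chain_exists[OF k qin i1(2)])
  have failS: "\<not> x (Suc dS) < x (Suc (Suc dS))" unfolding dS_def using LeastI_ex[OF exS] .
  have failI: "\<not> z (Suc dI) < z (Suc (Suc dI))" unfolding dI_def using LeastI_ex[OF exI] .
  have stS: "\<forall>t<dS. x (Suc t) < x (Suc (Suc t))" unfolding dS_def using not_less_Least by blast
  have stI: "\<forall>t<dI. z (Suc t) < z (Suc (Suc t))" unfolding dI_def using not_less_Least by blast
  have bS: "\<forall>t\<le>Suc dS. x t \<le> n \<and> (t \<le> dS \<longrightarrow> x t < n)"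
    unfolding x_def by (rule chain_bound[OF k]) (use i1 stS in \<open>auto simp: x_def\<close>)
  have bI: "\<forall>t\<le>Suc dI. z t \<le> n \<and> (t \<le> dI \<longrightarrow> z t < n)"
    unfolding z_def by (rule chain_bound[OF k qin i1(2)]) (use stI in \<open>auto simp: z_def\<close>)
  have zxo: "\<And>m. z (Suc (2*m)) = x (Suc (2*m))" unfolding x_def z_def by (rule xz_odd)
  have zxe: "\<And>m. (\<forall>l<m. x (2*l) < n) \<Longrightarrow> z (2*m) \<le> x (2*m)"
    unfolding x_def z_def by (rule xz_even[OF k]) (use qi in auto)
  define e where "e = e_simple c i"
  have e2: "2 \<le> e" using assms(3) e_def by simp
  show ?thesis
  proof (cases "odd e")
    case True
    have edS: "e = dS"
    proof (rule ccontr)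
      assume ne: "e \<noteq> dS"
      then have eI: "e = dI" "dI < dS" using eS e_def by auto
      have "odd dI" using True eI by simp
      then obtain k' where kk0: "dI = 2*k' + 1" using oddE by blast
      then have kk: "dI = Suc (2*k')" by simp
      have f1: "\<not> z (2*Suc k') < z (Suc (2*Suc k'))" using failI kk by simp
      have f2: "x (2*Suc k') < x (Suc (2*Suc k'))" using stS eI kk by simp
      have f3: "z (2*Suc k') \<le> x (2*Suc k')"
      proof (rule zxe, intro allI impI)
        fix l assume "l < Suc k'"
        then have "2*l \<le> dS" using eI kk by simp
        then show "x (2*l) < n" using bS by simp
      qed
      show False using f1 f2 f3 zxo[of "Suc k'"] by linarith
    qed
    obtain k' where kk0: "e = 2*k' + 1" using True oddE by blast
    then have kk: "e = Suc (2*k')" by simp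
    have k1: "1 \<le> k'" using kk e2 by simp
    have dIe: "e \<le> dI" using eS e_def edS by auto
    have hh: "hhat c i = x e + 1"
    proof -
      have "N_simple c i = (i - 1 + 1, i)" unfolding N_simple_def using True Sx e_def by simp
      moreover have "(syzo c ^^ e) (Some (i - 1 + 1, i)) = Some (x e + 1, x (Suc e))"
        unfolding syz_iter using stS edS by (simp add: x_def)
      ultimately show ?thesis unfolding hhat_def e_def by simp
    qed
    define j where "j = x e + 1"
    define y0 where "y0 = x e"
    define y where "y = ch (Qq c) y0 (Qq c j)"
    have xz_e: "x e = z e" using zxo[of k'] kk by simp
    have zj: "j \<le> z (Suc e)"
    proof -
      have "z (Suc (2*k')) < z (Suc (Suc (2*k')))" using stI dIe kk by simp
      then show ?thesis using xz_e kk j_def by simp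
    qed
    have y0n: "y0 \<le> n" using bS edS y0_def by simp
    have jn: "j \<le> n"
    proof -
      have "Suc e \<le> Suc dI" using dIe by simp
      then have "z (Suc e) \<le> n" using bI by blast
      then show ?thesis using zj by linarith
    qed
    have ij: "i < j"
    proof -
      have "x 1 \<le> x e" by (rule chain_mono[OF stS]) (use kk edS in auto)
      then show ?thesis using x0 j_def by simp
    qed
    have yev: "\<And>m. y (2*m) = (Qq c ^^ m) y0" by (simp add: y_def ch_even)
    have yodd: "\<And>m. y (Suc (2*m)) = (Qq c ^^ Suc m) j" by (simp add: y_def ch_odd funpow_swap1)
    have ych: "\<And>t. y (Suc (Suc t)) = Qq c (y t)" by (simp add: y_def)
    have xlt: "\<And>t. t \<le> dS \<Longrightarrow> x t < n" using bS by simp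
    have zlt: "\<And>t. t \<le> dI \<Longrightarrow> z t < n" using bI by simp
    have xke: "x (2*k') < y0"
    proof -
      have "2*k' - 1 < dS" using edS kk k1 by simp
      then have "x (Suc (2*k' - 1)) < x (Suc (Suc (2*k' - 1)))" using stS by blast
      moreover have "Suc (2*k' - 1) = 2*k'" using k1 by simp
      ultimately show ?thesis using y0_def kk by simp
    qed
    have A: "x (2*(k'-m)) < y (2*m) \<and> y (2*m) \<le> x (Suc (2*(k'-m)))" if m: "m \<le> k'" for m
    proof -
      have s1: "2*(k'-m) + 2*m = 2*k'" using m by simp
      have p1: "\<forall>t<2*(k'-m) + 2*m. x t < n" using s1 xlt kk edS by auto
      have p2: "x (2*(k'-m) + 2*m) < y0" using s1 xke by simp
      have p3: "y0 \<le> x (Suc (2*(k'-m) + 2*m))" using s1 y0_def kk by simp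
      have "x (2*(k'-m)) < (Qq c ^^ m) y0 \<and> (Qq c ^^ m) y0 \<le> x (Suc (2*(k'-m)))"
        by (rule GD[OF k chx p1 p2 p3 y0n])
      then show ?thesis using yev by simp
    qed
    have B: "z (Suc (2*(k'-1-m))) < y (Suc (2*m)) \<and> y (Suc (2*m)) \<le> z (2*(k'-m))" if m: "m < k'" for m
    proof -
      have s1: "Suc (2*(k'-1-m)) + 2*Suc m = e" using m kk by simp
      have p1: "\<forall>t<Suc (2*(k'-1-m)) + 2*Suc m. z t < n" using s1 zlt dIe by auto
      have p2: "z (Suc (2*(k'-1-m)) + 2*Suc m) < j" using s1 xz_e j_def by simp
      have p3: "j \<le> z (Suc (Suc (2*(k'-1-m)) + 2*Suc m))" using s1 zj by simp
      have "z (Suc (2*(k'-1-m))) < (Qq c ^^ Suc m) j \<and> (Qq c ^^ Suc m) j \<le> z (Suc (Suc (2*(k'-1-m))))"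
        by (rule GD[OF k chz p1 p2 p3 jn])
      moreover have "Suc (Suc (2*(k'-1-m))) = 2*(k'-m)" using m by simp
      ultimately show ?thesis using yodd by simp
    qed
    have C: "y (2*k') = i"
    proof -
      have "i - 1 < y (2*k') \<and> y (2*k') \<le> i" using A[of k'] x0 by simp
      then show ?thesis using i1(1) by linarith
    qed
    have D: "y (Suc (2*k')) = Qq c i"
    proof -
      define v where "v = y (Suc (2*(k'-1)))"
      have vv: "i < v" "v \<le> z 2" using B[of "k'-1"] k1 z0 v_def by (simp_all add: numeral_2_eq_2)
      have z2: "z 2 = Pp c (Qq c i)" using chz[of 0] z0 by (simp add: numeral_2_eq_2)
      have "2 \<le> Suc dI" using dIe kk k1 by simp
      then have "z 2 \<le> n" using bI by blast
      then have vn: "v \<le> n" using vv by linarith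
      have "Qq c v \<le> Qq c i" using Gal[OF k qin, of v] vv z2 vn by simp
      moreover have "Qq c i \<le> Qq c v" using Q_mono[OF k, of i v] vv vn i1 by simp
      moreover have "y (Suc (2*k')) = Qq c v"
      proof -
        have "Suc (2*k') = Suc (Suc (Suc (2*(k'-1))))" using k1 by simp
        then show ?thesis using ych v_def by simp
      qed
      ultimately show ?thesis by simp
    qed
    have E: "y (Suc (Suc (2*k'))) = Qq c i" using ych C by simp
    have st: "\<forall>t<2*k'. y (Suc (Suc t)) < y (Suc t)"
    proof (intro allI impI)
      fix t assume t: "t < 2*k'"
      show "y (Suc (Suc t)) < y (Suc t)"
      proof (cases "even t")
        case True
        then obtain m where m: "t = 2*m" using evenE by blast
        then have mk: "m < k'" using t by simp
        have i1: "2*Suc m = Suc (Suc t)" using m by simp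
        have i2: "k' - Suc m = k' - 1 - m" by simp
        have a1: "y (2*Suc m) \<le> x (Suc (2*(k'-Suc m)))" using A[of "Suc m"] mk by linarith
        have a2: "z (Suc (2*(k'-1-m))) < y (Suc (2*m))" using B[of m] mk by blast
        have a3: "z (Suc (2*(k'-1-m))) = x (Suc (2*(k'-1-m)))" by (rule zxo)
        have "y (Suc (Suc t)) \<le> x (Suc (2*(k'-1-m)))" using a1 unfolding i1 i2 .
        moreover have "x (Suc (2*(k'-1-m))) < y (Suc t)" using a2 a3 m by simp
        ultimately show ?thesis by linarith
      next
        case False
        then have "odd t" by simp
        then obtain m where m0: "t = 2*m + 1" using oddE by blast
        then have m: "t = Suc (2*m)" by simp
        then have mk: "m < k'" using t by simp
        have i1: "Suc (2*Suc m) = Suc (Suc t)" using m by simp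
        have i2: "2*Suc m = Suc t" using m by simp
        show ?thesis
        proof (cases "Suc m < k'")
          case True
          have b1: "y (Suc (2*Suc m)) \<le> z (2*(k'-Suc m))" using B[of "Suc m"] True by blast
          have b2: "z (2*(k'-Suc m)) \<le> x (2*(k'-Suc m))"
          proof (rule zxe, intro allI impI)
            fix l assume "l < k' - Suc m"
            then have "2*l \<le> dS" using edS kk by simp
            then show "x (2*l) < n" using xlt by simp
          qed
          have b3: "x (2*(k'-Suc m)) < y (2*Suc m)" using A[of "Suc m"] True by linarith
          show ?thesis using b1 b2 b3 unfolding i1 i2 by linarith
        next
          case False
          then have "Suc m = k'" using mk by simp
          then have "Suc (Suc t) = Suc (2*k')" "Suc t = 2*k'" using m by simp_all
          then show ?thesis using C D qi by simp
        qed
      qed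
    qed
    have ns: "\<not> y (Suc (Suc (2*k'))) < y (Suc (2*k'))" using D E by simp
    have qj: "Qq c j < y0"
    proof -
      have "y (Suc 0) \<le> z (2*k')" using B[of 0] k1 by simp
      moreover have "y (Suc 0) = Qq c j" by (simp add: y_def)
      moreover have "z (2*k') < z (Suc (2*k'))"
      proof -
        have "2*k' - 1 < dI" using dIe kk by simp
        then have "z (Suc (2*k' - 1)) < z (Suc (Suc (2*k' - 1)))" using stI by blast
        moreover have "Suc (2*k' - 1) = 2*k'" using k1 by simp
        ultimately show ?thesis by simp
      qed
      ultimately show ?thesis using xz_e kk y0_def by simp
    qed
    have y0j: "y0 < j" using y0_def j_def by simp
    have hh': "hhat c i = y0 + 1" using hh y0_def by simp
    have ed: "e_simple c i - 1 = 2*k'" using kk e_def by simp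
    show ?thesis
      by (rule final[OF k assms(2) y0j jn ij st[unfolded y_def] ns[unfolded y_def] C[unfolded y_def] qj hh' ed])

  next
    case False
    have edI: "e = dI"
    proof (rule ccontr)
      assume ne: "e \<noteq> dI"
      then have eS': "e = dS" "dS < dI" using eS e_def by auto
      have "even dS" using False eS' by simp
      then obtain k2 where k2: "dS = 2*k2" using evenE by blast
      then have k21: "1 \<le> k2" using eS' e2 by simp
      define k' where "k' = k2 - 1"
      have kk: "dS = Suc (Suc (2*k'))" using k2 k21 k'_def by simp
      have f1: "\<not> x (Suc (2*Suc k')) < x (2*Suc (Suc k'))" using failS kk by simp
      have f2: "z (Suc (2*Suc k')) < z (2*Suc (Suc k'))" using stI eS' kk by simp
      have f3: "z (2*Suc (Suc k')) \<le> x (2*Suc (Suc k'))"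
      proof (rule zxe, intro allI impI)
        fix l assume "l < Suc (Suc k')"
        then have "2*l \<le> dS" using kk by simp
        then show "x (2*l) < n" using bS by simp
      qed
      show False using f1 f2 f3 zxo[of "Suc k'"] by linarith
    qed
    have "even e" using False by simp
    then obtain k2 where k2: "e = 2*k2" using evenE by blast
    then have k21: "1 \<le> k2" using e2 by simp
    define k' where "k' = k2 - 1"
    have kk: "e = Suc (Suc (2*k'))" using k2 k21 k'_def by simp
    have dSe: "e \<le> dS" using eS e_def edI by auto
    have hh: "hhat c i = z e + 1"
    proof -
      have "N_simple c i = (Qq c i + 1, i)" unfolding N_simple_def using False Iz e_def by simp
      moreover have "(syzo c ^^ e) (Some (Qq c i + 1, i)) = Some (z e + 1, z (Suc e))"
        unfolding syz_iter using stI edI by (simp add: z_def)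
      ultimately show ?thesis unfolding hhat_def e_def by simp
    qed
    define j where "j = z (Suc e)"
    define y0 where "y0 = z e"
    define y where "y = ch (Qq c) y0 (Qq c j)"
    have y0n: "y0 \<le> n" using bI edI y0_def by simp
    have jn: "j \<le> n"
    proof -
      have "Suc e \<le> Suc dI" using edI by simp
      then show ?thesis using bI j_def by blast
    qed
    have y0j: "y0 < j"
    proof -
      have "Suc (2*k') < dI" using edI kk by simp
      then have "z (Suc (Suc (2*k'))) < z (Suc (Suc (Suc (2*k'))))" using stI by blast
      then show ?thesis using y0_def j_def kk by simp
    qed
    have ij: "i < j"
    proof -
      have "z 1 \<le> z e" by (rule chain_mono[OF stI]) (use kk edI in auto)
      then show ?thesis using z0 y0j y0_def by simp
    qed
    have jx: "j = x (Suc e)" using zxo[of "Suc k'"] kk j_def by simp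
    have yev: "\<And>m. y (2*m) = (Qq c ^^ m) y0" by (simp add: y_def ch_even)
    have yodd: "\<And>m. y (Suc (2*m)) = (Qq c ^^ Suc m) j" by (simp add: y_def ch_odd funpow_swap1)
    have ych: "\<And>t. y (Suc (Suc t)) = Qq c (y t)" by (simp add: y_def)
    have xlt: "\<And>t. t \<le> dS \<Longrightarrow> x t < n" using bS by simp
    have zlt: "\<And>t. t \<le> dI \<Longrightarrow> z t < n" using bI by simp
    have zke: "z (Suc (2*k')) < y0"
    proof -
      have "2*k' < dI" using edI kk by simp
      then have "z (Suc (2*k')) < z (Suc (Suc (2*k')))" using stI by blast
      then show ?thesis using y0_def kk by simp
    qed
    have A: "z (Suc (2*(k'-m))) < y (2*m) \<and> y (2*m) \<le> z (Suc (Suc (2*(k'-m))))" if m: "m \<le> k'" for m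
    proof -
      have s1: "Suc (2*(k'-m)) + 2*m = Suc (2*k')" using m by simp
      have p1: "\<forall>t<Suc (2*(k'-m)) + 2*m. z t < n" using s1 zlt kk edI by auto
      have p2: "z (Suc (2*(k'-m)) + 2*m) < y0" using s1 zke by simp
      have p3: "y0 \<le> z (Suc (Suc (2*(k'-m)) + 2*m))" using s1 y0_def kk by simp
      have "z (Suc (2*(k'-m))) < (Qq c ^^ m) y0 \<and> (Qq c ^^ m) y0 \<le> z (Suc (Suc (2*(k'-m))))"
        by (rule GD[OF k chz p1 p2 p3 y0n])
      then show ?thesis using yev by simp
    qed
    have B: "x (2*(k'-m)) < y (Suc (2*m)) \<and> y (Suc (2*m)) \<le> x (Suc (2*(k'-m)))" if m: "m \<le> k'" for m
    proof -
      have s1: "2*(k'-m) + 2*Suc m = e" using m kk by simp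
      have p1: "\<forall>t<2*(k'-m) + 2*Suc m. x t < n" using s1 xlt dSe by auto
      have p2: "x (2*(k'-m) + 2*Suc m) < j"
      proof -
        have "Suc (2*k') < dS" using dSe kk by simp
        then have "x (Suc (Suc (2*k'))) < x (Suc (Suc (Suc (2*k'))))" using stS by blast
        then show ?thesis using s1 jx kk by simp
      qed
      have p3: "j \<le> x (Suc (2*(k'-m) + 2*Suc m))" using s1 jx by simp
      have "x (2*(k'-m)) < (Qq c ^^ Suc m) j \<and> (Qq c ^^ Suc m) j \<le> x (Suc (2*(k'-m)))"
        by (rule GD[OF k chx p1 p2 p3 jn])
      then show ?thesis using yodd by simp
    qed
    have C: "y (Suc (2*k')) = i"
    proof -
      have "i - 1 < y (Suc (2*k')) \<and> y (Suc (2*k')) \<le> i" using B[of k'] x0 by simp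
      then show ?thesis using i1(1) by linarith
    qed
    have D: "y (Suc (Suc (2*k'))) = Qq c i"
    proof -
      define v where "v = y (2*k')"
      have vv: "i < v" "v \<le> z 2" using A[of k'] z0 v_def by (simp_all add: numeral_2_eq_2)
      have z2: "z 2 = Pp c (Qq c i)" using chz[of 0] z0 by (simp add: numeral_2_eq_2)
      have "2 \<le> Suc dI" using edI kk by simp
      then have "z 2 \<le> n" using bI by blast
      then have vn: "v \<le> n" using vv by linarith
      have "Qq c v \<le> Qq c i" using Gal[OF k qin, of v] vv z2 vn by simp
      moreover have "Qq c i \<le> Qq c v" using Q_mono[OF k, of i v] vv vn i1 by simp
      moreover have "y (Suc (Suc (2*k'))) = Qq c v" using ych v_def by simp
      ultimately show ?thesis by simp
    qed
    have E: "y (Suc (Suc (Suc (2*k')))) = Qq c i" using ych C by simp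
    have st: "\<forall>t<Suc (2*k'). y (Suc (Suc t)) < y (Suc t)"
    proof (intro allI impI)
      fix t assume t: "t < Suc (2*k')"
      show "y (Suc (Suc t)) < y (Suc t)"
      proof (cases "even t")
        case True
        then obtain m where m: "t = 2*m" using evenE by blast
        then have mk: "m \<le> k'" using t by simp
        show ?thesis
        proof (cases "m < k'")
          case True
          have i1: "2*Suc m = Suc (Suc t)" using m by simp
          have i2: "Suc (Suc (2*(k'-Suc m))) = 2*(k'-m)" using True by simp
          have a1: "y (2*Suc m) \<le> z (Suc (Suc (2*(k'-Suc m))))" using A[of "Suc m"] True by linarith
          have a2: "z (2*(k'-m)) \<le> x (2*(k'-m))"
          proof (rule zxe, intro allI impI)
            fix l assume "l < k' - m"
            then have "2*l \<le> dS" using dSe kk by simp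
            then show "x (2*l) < n" using xlt by simp
          qed
          have a3: "x (2*(k'-m)) < y (Suc (2*m))" using B[of m] mk by blast
          show ?thesis using a1 a2 a3 unfolding i1 i2 m by linarith
        next
          case False
          then have "m = k'" using mk by simp
          then have "Suc (Suc t) = Suc (Suc (2*k'))" "Suc t = Suc (2*k')" using m by simp_all
          then show ?thesis using C D qi by simp
        qed
      next
        case False
        then have "odd t" by simp
        then obtain m where m0: "t = 2*m + 1" using oddE by blast
        then have m: "t = Suc (2*m)" by simp
        then have mk: "m < k'" using t by simp
        have i1: "Suc (2*Suc m) = Suc (Suc t)" using m by simp
        have i2: "2*Suc m = Suc t" using m by simp
        have b1: "y (Suc (2*Suc m)) \<le> x (Suc (2*(k'-Suc m)))" using B[of "Suc m"] mk by linarith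
        have b2: "z (Suc (2*(k'-Suc m))) = x (Suc (2*(k'-Suc m)))" by (rule zxo)
        have b3: "z (Suc (2*(k'-Suc m))) < y (2*Suc m)" using A[of "Suc m"] mk by linarith
        show ?thesis using b1 b2 b3 unfolding i1 i2 by linarith
      qed
    qed
    have ns: "\<not> y (Suc (Suc (Suc (2*k')))) < y (Suc (Suc (2*k')))" using D E by simp
    have qj: "Qq c j < y0"
    proof -
      have "y (Suc 0) \<le> x (Suc (2*k'))" using B[of 0] by simp
      moreover have "y (Suc 0) = Qq c j" by (simp add: y_def)
      ultimately show ?thesis using zxo[of k'] zke by simp
    qed
    have hh': "hhat c i = y0 + 1" using hh y0_def by simp
    have ed: "e_simple c i - 1 = Suc (2*k')" using kk e_def by simp
    show ?thesis
      by (rule final[OF k assms(2) y0j jn ij st[unfolded y_def] ns[unfolded y_def] C[unfolded y_def] qj hh' ed])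

  qed
qed

end
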